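(* For $m\ge1$, the space $(\mathbb Z^m,d_a)$ admits a linear $1$-perfect code if and only if there exists an Abelian planar difference set of order $m$.
   Context: $d_a(\mathbf x,\mathbf y)=\max\{\sum_{i:x_i>y_i}(x_i-y_i),\sum_{i:x_i<y_i}(y_i-x_i)\}$ on $\mathbb Z^m$. A linear code is a sublattice (subgroup) of $\mathbb Z^m$. A code $\mathcal C$ is $r$-perfect if the balls $\{\mathbf y:d_a(\mathbf y,\mathbf x)\le r\}$, $\mathbf x\in\mathcal C$, are pairwise disjoint and cover $\mathbb Z^m$. An Abelian planar difference set of order $m$ is a subset $D$ of cardinality $m+1$ of an Abelian group $G$ of order $m^2+m+1$ such that every nonzero element of $G$ can be written as $a-b$ with $a,b\in D$ in exactly one way. *)

theory Defs
  imports "HOL-Algebra.Group"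
begin

text \<open>Points of Z^m: integer vectors indexed by 0..m-1, represented as
  functions nat => int vanishing outside {..<m}.\<close>
definition Zm :: "nat \<Rightarrow> (nat \<Rightarrow> int) set" where
  "Zm m = {x. \<forall>i\<ge>m. x i = 0}"

definition d_a :: "nat \<Rightarrow> (nat \<Rightarrow> int) \<Rightarrow> (nat \<Rightarrow> int) \<Rightarrow> int" where
  "d_a m x y = max (\<Sum>i\<in>{i. i < m \<and> x i > y i}. x i - y i)
                   (\<Sum>i\<in>{i. i < m \<and> x i < y i}. y i - x i)"

definition ball_a :: "nat \<Rightarrow> (nat \<Rightarrow> int) \<Rightarrow> int \<Rightarrow> (nat \<Rightarrow> int) set" where
  "ball_a m x r = {y \<in> Zm m. d_a m y x \<le> r}"

definition linear_code :: "nat \<Rightarrow> (nat \<Rightarrow> int) set \<Rightarrow> bool" where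
  "linear_code m C \<longleftrightarrow> C \<subseteq> Zm m \<and> (\<lambda>_. 0) \<in> C \<and>
     (\<forall>x\<in>C. \<forall>y\<in>C. (\<lambda>i. x i + y i) \<in> C) \<and> (\<forall>x\<in>C. (\<lambda>i. - x i) \<in> C)"

definition perfect_code :: "nat \<Rightarrow> int \<Rightarrow> (nat \<Rightarrow> int) set \<Rightarrow> bool" where
  "perfect_code m r C \<longleftrightarrow> C \<subseteq> Zm m \<and>
     (\<forall>x\<in>C. \<forall>x'\<in>C. x \<noteq> x' \<longrightarrow> ball_a m x r \<inter> ball_a m x' r = {}) \<and>
     (\<Union>x\<in>C. ball_a m x r) = Zm m"

text \<open>Abelian planar difference set of order m in the group G (written
  multiplicatively, so a - b is a \<otimes> inv b).\<close>
definition abelian_planar_difference_set :: "('a, 'b) monoid_scheme \<Rightarrow> 'a set \<Rightarrow> nat \<Rightarrow> bool" where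
  "abelian_planar_difference_set G D m \<longleftrightarrow>
     comm_group G \<and> finite (carrier G) \<and> card (carrier G) = m^2 + m + 1 \<and>
     D \<subseteq> carrier G \<and> card D = m + 1 \<and>
     (\<forall>g\<in>carrier G. g \<noteq> \<one>\<^bsub>G\<^esub> \<longrightarrow>
        (\<exists>!p. p \<in> D \<times> D \<and> g = fst p \<otimes>\<^bsub>G\<^esub> inv\<^bsub>G\<^esub> (snd p)))"

end

theory Submission
  imports Defs "HOL-Algebra.FiniteProduct"
begin


definition u :: "nat \<Rightarrow> nat \<Rightarrow> int" where
  "u a = (\<lambda>i. if a = Suc i then 1 else 0)"

lemma d_a_trans: "d_a m x y = d_a m (\<lambda>i. x i - y i) (\<lambda>_. 0)"
  unfolding d_a_def by simp

lemma u_inj: "u a = u b \<Longrightarrow> a = b"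
proof (cases a)
  case 0
  assume h: "u a = u b"
  show ?thesis
  proof (cases b)
    case (Suc j) then show ?thesis using fun_cong[OF h, of j] 0 by (simp add: u_def)
  qed (simp add: 0)
next
  case (Suc j)
  assume h: "u a = u b"
  show ?thesis using fun_cong[OF h, of j] Suc by (simp add: u_def split: if_splits)
qed

lemma u_diff_eq:
  assumes h: "(\<lambda>i. u a i - u b i) = (\<lambda>i. u c i - u d i)" and ab: "a \<noteq> b"
  shows "a = c \<and> b = d"
proof -
  have ac: "a = c"
  proof (cases a)
    case (Suc j)
    show ?thesis using fun_cong[OF h, of j] Suc ab by (auto simp: u_def split: if_splits)
  next
    case 0
    then obtain j where b: "b = Suc j" using ab by (cases b) auto
    have "d = b" using fun_cong[OF h, of j] b 0 by (auto simp: u_def split: if_splits)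
    have "u a = u c"
    proof
      fix i show "u a i = u c i" using fun_cong[OF h, of i] \<open>d = b\<close> by simp
    qed
    thus ?thesis by (rule u_inj)
  qed
  have "u b = u d"
  proof
    fix i show "u b i = u d i" using fun_cong[OF h, of i] ac by simp
  qed
  thus ?thesis using ac u_inj by blast
qed

lemma u_Zm: "a \<le> m \<Longrightarrow> u a \<in> Zm m"
  by (auto simp: u_def Zm_def)

lemma pos_set_card:
  fixes \<beta> :: "nat \<Rightarrow> int"
  assumes "(\<Sum>i\<in>S. \<beta> i) \<le> 1" "finite S" "\<forall>i\<in>S. \<beta> i > 0"
  shows "S = {} \<or> (\<exists>j. S = {j} \<and> \<beta> j = 1)"
proof -
  have "int (card S) = (\<Sum>i\<in>S. 1)" by simp
  also have "\<dots> \<le> (\<Sum>i\<in>S. \<beta> i)" using assms(3) by (intro sum_mono) auto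
  finally have "card S \<le> 1" using assms(1) by linarith
  show ?thesis
  proof (cases "S = {}")
    case False
    then obtain j where j: "j \<in> S" by auto
    have "\<forall>a1 \<in> S. \<forall>a2 \<in> S. a1 = a2" using \<open>card S \<le> 1\<close> card_le_Suc0_iff_eq[OF assms(2)] by simp
    hence "S = {j}" using j by blast
    with assms show ?thesis by auto
  qed simp
qed

lemma ball0_char:
  assumes "\<beta> \<in> Zm m"
  shows "d_a m \<beta> (\<lambda>_. 0) \<le> 1 \<longleftrightarrow> (\<exists>a\<le>m. \<exists>b\<le>m. \<beta> = (\<lambda>i. u a i - u b i))"
proof
  assume "d_a m \<beta> (\<lambda>_. 0) \<le> 1"
  hence P: "(\<Sum>i\<in>{i. i < m \<and> \<beta> i > 0}. \<beta> i) \<le> 1"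
    and N: "(\<Sum>i\<in>{i. i < m \<and> \<beta> i < 0}. - \<beta> i) \<le> 1" by (auto simp: d_a_def)
  have fP: "finite {i. i < m \<and> \<beta> i > 0}" "finite {i. i < m \<and> \<beta> i < 0}" by simp_all
  have P': "{i. i < m \<and> \<beta> i > 0} = {} \<or> (\<exists>j. {i. i < m \<and> \<beta> i > 0} = {j} \<and> \<beta> j = 1)"
    by (rule pos_set_card[OF P fP(1)]) simp
  have N': "{i. i < m \<and> \<beta> i < 0} = {} \<or> (\<exists>j. {i. i < m \<and> \<beta> i < 0} = {j} \<and> - \<beta> j = 1)"
    by (rule pos_set_card[OF N fP(2)]) simp
  obtain a where a: "a \<le> m" "\<forall>i<m. \<beta> i > 0 \<longleftrightarrow> a = Suc i" "\<forall>i. a = Suc i \<longrightarrow> \<beta> i = 1"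
  proof (cases "{i. i < m \<and> \<beta> i > 0} = {}")
    case True
    show ?thesis by (rule that[of 0]) (use True in blast)+
  next
    case False
    then obtain j where j: "{i. i < m \<and> \<beta> i > 0} = {j}" "\<beta> j = 1" using P' by auto
    have jj: "\<And>i. (i < m \<and> \<beta> i > 0) \<longleftrightarrow> i = j" using j(1) by blast
    hence "j < m" by blast
    show ?thesis
    proof (rule that[of "Suc j"])
      show "Suc j \<le> m" using \<open>j < m\<close> by simp
      show "\<forall>i<m. 0 < \<beta> i \<longleftrightarrow> Suc j = Suc i"
      proof (intro allI impI)
        fix i assume "i < m" thus "0 < \<beta> i \<longleftrightarrow> Suc j = Suc i" using jj[of i] by auto
      qed
      show "\<forall>i. Suc j = Suc i \<longrightarrow> \<beta> i = 1" using j(2) by simp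
    qed
  qed
  obtain b where b: "b \<le> m" "\<forall>i<m. \<beta> i < 0 \<longleftrightarrow> b = Suc i" "\<forall>i. b = Suc i \<longrightarrow> \<beta> i = -1"
  proof (cases "{i. i < m \<and> \<beta> i < 0} = {}")
    case True
    show ?thesis by (rule that[of 0]) (use True in blast)+
  next
    case False
    then obtain j where j: "{i. i < m \<and> \<beta> i < 0} = {j}" "\<beta> j = -1" using N' by auto
    have jj: "\<And>i. (i < m \<and> \<beta> i < 0) \<longleftrightarrow> i = j" using j(1) by blast
    hence "j < m" by blast
    show ?thesis
    proof (rule that[of "Suc j"])
      show "Suc j \<le> m" using \<open>j < m\<close> by simp
      show "\<forall>i<m. \<beta> i < 0 \<longleftrightarrow> Suc j = Suc i"
      proof (intro allI impI)
        fix i assume "i < m" thus "\<beta> i < 0 \<longleftrightarrow> Suc j = Suc i" using jj[of i] by auto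
      qed
      show "\<forall>i. Suc j = Suc i \<longrightarrow> \<beta> i = -1" using j(2) by simp
    qed
  qed
  have "\<beta> = (\<lambda>i. u a i - u b i)"
  proof
    fix i
    show "\<beta> i = u a i - u b i"
    proof (cases "i < m")
      case True
      have ia: "0 < \<beta> i \<longleftrightarrow> a = Suc i" using a(2) True by blast
      have ib: "\<beta> i < 0 \<longleftrightarrow> b = Suc i" using b(2) True by blast
      show ?thesis
      proof (cases "a = Suc i")
        case True
        then show ?thesis using ia ib a(3) by (auto simp: u_def)
      next
        case F1: False
        show ?thesis
        proof (cases "b = Suc i")
          case True
          then show ?thesis using ia ib b(3) F1 by (auto simp: u_def)
        next
          case False
          then have "\<beta> i = 0" using ia ib F1 by linarith
          then show ?thesis using False F1 by (simp add: u_def)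
        qed
      qed
    next
      case False
      then show ?thesis using assms a(1) b(1) by (auto simp: u_def Zm_def)
    qed
  qed
  thus "\<exists>a\<le>m. \<exists>b\<le>m. \<beta> = (\<lambda>i. u a i - u b i)" using a(1) b(1) by blast
next
  assume "\<exists>a\<le>m. \<exists>b\<le>m. \<beta> = (\<lambda>i. u a i - u b i)"
  then obtain a b where ab: "a \<le> m" "b \<le> m" "\<beta> = (\<lambda>i. u a i - u b i)" by blast
  show "d_a m \<beta> (\<lambda>_. 0) \<le> 1"
  proof (cases "a = b")
    case True
    then show ?thesis using ab by (simp add: d_a_def)
  next
    case False
    have S1: "{i. i < m \<and> \<beta> i > 0} \<subseteq> {a - 1}" using ab False by (auto simp: u_def split: if_splits)
    have S2: "{i. i < m \<and> \<beta> i < 0} \<subseteq> {b - 1}" using ab False by (auto simp: u_def split: if_splits)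
    have v1: "\<forall>i. \<beta> i \<le> 1" "\<forall>i. - \<beta> i \<le> 1" using ab by (auto simp: u_def)
    have "(\<Sum>i\<in>{i. i < m \<and> \<beta> i > 0}. \<beta> i) \<le> 1"
    proof (cases "{i. i < m \<and> \<beta> i > 0} = {}")
      case False then have "{i. i < m \<and> \<beta> i > 0} = {a - 1}" using S1 by blast
      then show ?thesis using v1 by simp
    next
      case True then show ?thesis by (simp only: True sum.empty zero_le_one)
    qed
    moreover have "(\<Sum>i\<in>{i. i < m \<and> \<beta> i < 0}. - \<beta> i) \<le> 1"
    proof (cases "{i. i < m \<and> \<beta> i < 0} = {}")
      case False then have "{i. i < m \<and> \<beta> i < 0} = {b - 1}" using S2 by blast
      then show ?thesis using v1 by simp
    next
      case True then show ?thesis by (simp only: True sum.empty zero_le_one)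
    qed
    moreover have e: "d_a m \<beta> (\<lambda>_. 0) = max (\<Sum>i\<in>{i. i < m \<and> \<beta> i > 0}. \<beta> i) (\<Sum>i\<in>{i. i < m \<and> \<beta> i < 0}. - \<beta> i)"
      unfolding d_a_def by simp
    ultimately show ?thesis by linarith
  qed
qed




lemma (in group) mult_inv_one_iff:
  "x \<in> carrier G \<Longrightarrow> y \<in> carrier G \<Longrightarrow> x \<otimes> inv y = \<one> \<longleftrightarrow> x = y"
  by (simp add: inv_solve_right')

lemma card_from_pds:
  fixes H :: "'a monoid" (structure)
  assumes cg: "comm_group H" and fin: "finite (carrier H)" and Dsub: "D \<subseteq> carrier H"
    and cD: "card D = m + 1"
    and uq: "\<forall>g\<in>carrier H. g \<noteq> \<one>\<^bsub>H\<^esub> \<longrightarrow> (\<exists>!p. p \<in> D \<times> D \<and> g = fst p \<otimes>\<^bsub>H\<^esub> inv\<^bsub>H\<^esub> (snd p))"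
  shows "card (carrier H) = m^2 + m + 1"
proof -
  interpret comm_group H by (rule cg)
  have finD: "finite D" using fin Dsub finite_subset by blast
  define P where "P = D \<times> D - (\<lambda>x. (x, x)) ` D"
  define f where "f p = fst p \<otimes> inv (snd p)" for p
  have Pne: "p \<in> P \<Longrightarrow> f p \<noteq> \<one> \<and> f p \<in> carrier H" for p
  proof -
    assume "p \<in> P"
    then obtain x y where xy: "p = (x, y)" "x \<in> D" "y \<in> D" "x \<noteq> y" by (auto simp: P_def)
    hence "x \<in> carrier H" "y \<in> carrier H" using Dsub by auto
    thus ?thesis using xy by (simp add: f_def mult_inv_one_iff)
  qed
  have "bij_betw f P (carrier H - {\<one>})"
  proof (rule bij_betw_imageI)
    show "inj_on f P"
    proof (rule inj_onI)
      fix p q assume pq: "p \<in> P" "q \<in> P" "f p = f q"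
      have "f p \<in> carrier H" "f p \<noteq> \<one>" using Pne pq(1) by auto
      with uq have "\<exists>!p'. p' \<in> D \<times> D \<and> f p = fst p' \<otimes> inv (snd p')" by blast
      moreover have "p \<in> D \<times> D" "q \<in> D \<times> D" using pq by (auto simp: P_def)
      ultimately show "p = q" using pq(3) unfolding f_def by metis
    qed
    show "f ` P = carrier H - {\<one>}"
    proof
      show "f ` P \<subseteq> carrier H - {\<one>}" using Pne by fastforce
      show "carrier H - {\<one>} \<subseteq> f ` P"
      proof
        fix g assume g: "g \<in> carrier H - {\<one>}"
        with uq obtain p where p: "p \<in> D \<times> D" "g = fst p \<otimes> inv (snd p)" by blast
        have "fst p \<noteq> snd p" using p g Dsub by auto
        hence "p \<in> P" using p(1) by (auto simp: P_def)
        thus "g \<in> f ` P" using p(2) by (auto simp: f_def)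
      qed
    qed
  qed
  hence "card P = card (carrier H - {\<one>})" by (rule bij_betw_same_card)
  moreover have "card P = (m+1) * (m+1) - (m+1)"
  proof -
    have "card (D \<times> D - (\<lambda>x. (x, x)) ` D) = card (D \<times> D) - card ((\<lambda>x. (x, x)) ` D)"
      by (rule card_Diff_subset) (use finD in auto)
    moreover have "card ((\<lambda>x. (x, x)) ` D) = card D" by (rule card_image) (auto simp: inj_on_def)
    ultimately show ?thesis by (simp add: P_def card_cartesian_product cD)
  qed
  moreover have "card (carrier H - {\<one>}) = card (carrier H) - 1" by (rule card_Diff_singleton) simp
  moreover have "card (carrier H) \<ge> 1" using fin by (metis one_closed card_0_eq empty_iff less_one not_le)
  ultimately show ?thesis by (simp add: power2_eq_square algebra_simps)
qed

lemma transport: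
  fixes H :: "'a monoid" (structure)
  assumes cg: "comm_group H" and fin: "finite (carrier H)" and Dsub: "D \<subseteq> carrier H"
    and cD: "card D = m + 1"
    and uq: "\<forall>g\<in>carrier H. g \<noteq> \<one>\<^bsub>H\<^esub> \<longrightarrow> (\<exists>!p. p \<in> D \<times> D \<and> g = fst p \<otimes>\<^bsub>H\<^esub> inv\<^bsub>H\<^esub> (snd p))"
  shows "\<exists>(G :: nat monoid) D'. abelian_planar_difference_set G D' m"
proof -
  interpret comm_group H by (rule cg)
  have cardH: "card (carrier H) = m^2 + m + 1" by (rule card_from_pds[OF assms])
  obtain f :: "'a \<Rightarrow> nat" and n :: nat where f: "inj_on f (carrier H)"
    using finite_imp_inj_to_nat_seg[OF fin] by blast
  define g where "g = the_inv_into (carrier H) f"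
  have gf: "a \<in> carrier H \<Longrightarrow> g (f a) = a" for a unfolding g_def by (rule the_inv_into_f_f[OF f])
  define G where "G = \<lparr>carrier = f ` carrier H, mult = (\<lambda>x y. f (g x \<otimes> g y)), one = f \<one>\<rparr>"
  have cG: "carrier G = f ` carrier H" and mG: "x \<otimes>\<^bsub>G\<^esub> y = f (g x \<otimes> g y)" and oG: "\<one>\<^bsub>G\<^esub> = f \<one>"
    for x y by (simp_all add: G_def)
  have mG': "a \<in> carrier H \<Longrightarrow> b \<in> carrier H \<Longrightarrow> f a \<otimes>\<^bsub>G\<^esub> f b = f (a \<otimes> b)" for a b
    by (simp add: mG gf)
  have cgG: "comm_group G"
  proof (rule comm_groupI)
    show "x \<otimes>\<^bsub>G\<^esub> y \<in> carrier G" if "x \<in> carrier G" "y \<in> carrier G" for x y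
      using that by (auto simp: cG mG')
    show "\<one>\<^bsub>G\<^esub> \<in> carrier G" by (simp add: cG oG)
    show "x \<otimes>\<^bsub>G\<^esub> y \<otimes>\<^bsub>G\<^esub> z = x \<otimes>\<^bsub>G\<^esub> (y \<otimes>\<^bsub>G\<^esub> z)"
      if "x \<in> carrier G" "y \<in> carrier G" "z \<in> carrier G" for x y z
      using that by (auto simp: cG mG' m_assoc)
    show "x \<otimes>\<^bsub>G\<^esub> y = y \<otimes>\<^bsub>G\<^esub> x" if "x \<in> carrier G" "y \<in> carrier G" for x y
      using that by (auto simp: cG mG' m_comm)
    show "\<one>\<^bsub>G\<^esub> \<otimes>\<^bsub>G\<^esub> x = x" if "x \<in> carrier G" for x
      using that by (auto simp: cG mG' oG)
    show "\<exists>y\<in>carrier G. y \<otimes>\<^bsub>G\<^esub> x = \<one>\<^bsub>G\<^esub>" if xG: "x \<in> carrier G" for x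
    proof -
      obtain a where a: "a \<in> carrier H" "x = f a" using xG cG by auto
      show ?thesis using a by (intro bexI[of _ "f (inv a)"]) (auto simp: cG mG' oG)
    qed
  qed
  interpret G: comm_group G by (rule cgG)
  have iG: "a \<in> carrier H \<Longrightarrow> inv\<^bsub>G\<^esub> (f a) = f (inv a)" for a
    by (rule G.inv_equality) (auto simp: cG mG' oG)
  have dG: "a \<in> carrier H \<Longrightarrow> b \<in> carrier H \<Longrightarrow> f a \<otimes>\<^bsub>G\<^esub> inv\<^bsub>G\<^esub> (f b) = f (a \<otimes> inv b)" for a b
    by (simp add: iG mG')
  have finj: "a \<in> carrier H \<Longrightarrow> b \<in> carrier H \<Longrightarrow> f a = f b \<longleftrightarrow> a = b" for a b
    using f by (auto simp: inj_on_def)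
  have "abelian_planar_difference_set G (f ` D) m"
    unfolding abelian_planar_difference_set_def
  proof (intro conjI)
    show "comm_group G" by (rule cgG)
    show "finite (carrier G)" using fin by (simp add: cG)
    show "card (carrier G) = m^2 + m + 1" using cardH card_image[OF f] by (simp add: cG)
    show "f ` D \<subseteq> carrier G" using Dsub by (auto simp: cG)
    show "card (f ` D) = m + 1" using cD card_image[OF inj_on_subset[OF f Dsub]] by simp
    show "\<forall>x\<in>carrier G. x \<noteq> \<one>\<^bsub>G\<^esub> \<longrightarrow>
        (\<exists>!p. p \<in> f ` D \<times> f ` D \<and> x = fst p \<otimes>\<^bsub>G\<^esub> inv\<^bsub>G\<^esub> (snd p))"
    proof (intro ballI impI)
      fix x assume x: "x \<in> carrier G" "x \<noteq> \<one>\<^bsub>G\<^esub>"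
      then obtain a where a: "a \<in> carrier H" "x = f a" by (auto simp: cG)
      have "a \<noteq> \<one>" using x a by (auto simp: oG)
      with uq a obtain p0 where p0: "p0 \<in> D \<times> D" "a = fst p0 \<otimes> inv (snd p0)"
        and p0u: "\<And>q. q \<in> D \<times> D \<Longrightarrow> a = fst q \<otimes> inv (snd q) \<Longrightarrow> q = p0" by metis
      show "\<exists>!p. p \<in> f ` D \<times> f ` D \<and> x = fst p \<otimes>\<^bsub>G\<^esub> inv\<^bsub>G\<^esub> (snd p)"
      proof (rule ex1I[of _ "(f (fst p0), f (snd p0))"])
        show "(f (fst p0), f (snd p0)) \<in> f ` D \<times> f ` D \<and>
          x = fst (f (fst p0), f (snd p0)) \<otimes>\<^bsub>G\<^esub> inv\<^bsub>G\<^esub> (snd (f (fst p0), f (snd p0)))"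
        proof -
          have "fst p0 \<in> D" "snd p0 \<in> D" using p0 by auto
          hence "fst p0 \<in> carrier H" "snd p0 \<in> carrier H" using Dsub by auto
          thus ?thesis using p0 a \<open>fst p0 \<in> D\<close> \<open>snd p0 \<in> D\<close> by (simp add: dG)
        qed
        fix q assume q: "q \<in> f ` D \<times> f ` D \<and> x = fst q \<otimes>\<^bsub>G\<^esub> inv\<^bsub>G\<^esub> (snd q)"
        then obtain b1 b2 where b: "b1 \<in> D" "b2 \<in> D" "q = (f b1, f b2)" by auto
        have "b1 \<in> carrier H" "b2 \<in> carrier H" using b Dsub by auto
        hence "f a = f (b1 \<otimes> inv b2)" using q b a by (simp add: dG)
        hence "a = b1 \<otimes> inv b2" using finj[of a "b1 \<otimes> inv b2"] a \<open>b1 \<in> carrier H\<close> \<open>b2 \<in> carrier H\<close> by simp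
        hence "(b1, b2) = p0" using p0u b by auto
        thus "q = (f (fst p0), f (snd p0))" using b by auto
      qed
    qed
  qed
  thus ?thesis by blast
qed




definition B0 :: "nat \<Rightarrow> (nat \<Rightarrow> int) set" where "B0 m = ball_a m (\<lambda>_. 0) 1"

lemma B0_Zm: "B0 m \<subseteq> Zm m" by (auto simp: B0_def ball_a_def)

lemma B0_iff: "\<beta> \<in> B0 m \<longleftrightarrow> \<beta> \<in> Zm m \<and> (\<exists>a\<le>m. \<exists>b\<le>m. \<beta> = (\<lambda>i. u a i - u b i))"
  using ball0_char by (auto simp: B0_def ball_a_def)

lemma uu_Zm: "a \<le> m \<Longrightarrow> b \<le> m \<Longrightarrow> (\<lambda>i. u a i - u b i) \<in> Zm m"
  by (auto simp: u_def Zm_def)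

lemma uu_B0: "a \<le> m \<Longrightarrow> b \<le> m \<Longrightarrow> (\<lambda>i. u a i - u b i) \<in> B0 m"
  using uu_Zm B0_iff by blast

lemma u0: "u 0 = (\<lambda>_. 0)" by (simp add: u_def)

lemma u_B0: "a \<le> m \<Longrightarrow> u a \<in> B0 m"
  using uu_B0[of a m 0] by (simp add: u0)

lemma finite_B0: "finite (B0 m)"
proof -
  have "B0 m \<subseteq> (\<lambda>(a, b). (\<lambda>i. u a i - u b i)) ` ({..m} \<times> {..m})"
    by (auto simp: B0_iff)
  thus ?thesis by (rule finite_subset) simp
qed

lemma Zm_add: "x \<in> Zm m \<Longrightarrow> y \<in> Zm m \<Longrightarrow> (\<lambda>i. x i + y i) \<in> Zm m" by (simp add: Zm_def)
lemma Zm_diff: "x \<in> Zm m \<Longrightarrow> y \<in> Zm m \<Longrightarrow> (\<lambda>i. x i - y i) \<in> Zm m" by (simp add: Zm_def)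
lemma Zm_neg: "x \<in> Zm m \<Longrightarrow> (\<lambda>i. - x i) \<in> Zm m" by (simp add: Zm_def)
lemma Zm_zero: "(\<lambda>_. 0) \<in> Zm m" by (simp add: Zm_def)

locale pcode =
  fixes m :: nat and C :: "(nat \<Rightarrow> int) set"
  assumes lin: "linear_code m C" and perf: "perfect_code m 1 C"
begin

lemma C_Zm: "C \<subseteq> Zm m" using lin by (simp add: linear_code_def)
lemma C_zero: "(\<lambda>_. 0) \<in> C" using lin by (simp add: linear_code_def)
lemma C_add: "x \<in> C \<Longrightarrow> y \<in> C \<Longrightarrow> (\<lambda>i. x i + y i) \<in> C" using lin by (simp add: linear_code_def)
lemma C_neg: "x \<in> C \<Longrightarrow> (\<lambda>i. - x i) \<in> C" using lin by (simp add: linear_code_def)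
lemma C_diff: "x \<in> C \<Longrightarrow> y \<in> C \<Longrightarrow> (\<lambda>i. x i - y i) \<in> C"
  using C_add[of x "\<lambda>i. - y i"] C_neg[of y] by simp

lemma dec: "y \<in> Zm m \<Longrightarrow> \<exists>\<beta>\<in>B0 m. (\<lambda>i. y i - \<beta> i) \<in> C"
proof -
  assume y: "y \<in> Zm m"
  have "y \<in> (\<Union>x\<in>C. ball_a m x 1)" using perf y by (simp add: perfect_code_def)
  then obtain c where c: "c \<in> C" "y \<in> ball_a m c 1" by blast
  have cZ: "c \<in> Zm m" using c C_Zm by auto
  define \<beta> where "\<beta> = (\<lambda>i. y i - c i)"
  have "\<beta> \<in> B0 m" using c(2) y cZ d_a_trans[of m y c]
    by (auto simp: B0_def ball_a_def \<beta>_def Zm_diff)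
  moreover have "(\<lambda>i. y i - \<beta> i) = c" by (simp add: \<beta>_def)
  ultimately show ?thesis using c(1) by auto
qed

lemma uniq: assumes "\<beta> \<in> B0 m" "\<beta>' \<in> B0 m" "(\<lambda>i. \<beta> i - \<beta>' i) \<in> C" shows "\<beta> = \<beta>'"
proof -
  define c where "c = (\<lambda>i. \<beta> i - \<beta>' i)"
  have Z: "\<beta> \<in> Zm m" "\<beta>' \<in> Zm m" using assms B0_Zm by auto
  have "\<beta> \<in> ball_a m (\<lambda>_. 0) 1" using assms(1) by (simp add: B0_def)
  moreover have "\<beta> \<in> ball_a m c 1"
  proof -
    have "(\<lambda>i. \<beta> i - c i) = \<beta>'" by (simp add: c_def)
    hence "d_a m \<beta> c = d_a m \<beta>' (\<lambda>_. 0)" using d_a_trans[of m \<beta> c] by simp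
    thus ?thesis using assms(2) Z by (simp add: B0_def ball_a_def)
  qed
  ultimately have "c = (\<lambda>_. 0)"
    using perf C_zero assms(3) unfolding perfect_code_def c_def by blast
  thus ?thesis unfolding c_def by (metis (no_types, lifting) ext eq_iff_diff_eq_0)
qed

definition r :: "(nat \<Rightarrow> int) \<Rightarrow> (nat \<Rightarrow> int)" where
  "r y = (SOME \<beta>. \<beta> \<in> B0 m \<and> (\<lambda>i. y i - \<beta> i) \<in> C)"

lemma r_prop: "y \<in> Zm m \<Longrightarrow> r y \<in> B0 m \<and> (\<lambda>i. y i - r y i) \<in> C"
proof -
  assume "y \<in> Zm m"
  then obtain \<beta> where "\<beta> \<in> B0 m \<and> (\<lambda>i. y i - \<beta> i) \<in> C" using dec by blast
  thus ?thesis unfolding r_def by (rule someI[where P="\<lambda>\<beta>. \<beta> \<in> B0 m \<and> (\<lambda>i. y i - \<beta> i) \<in> C"])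
qed

lemma r_eq: assumes "y \<in> Zm m" "y' \<in> Zm m" "(\<lambda>i. y i - y' i) \<in> C" shows "r y = r y'"
proof (rule uniq)
  show "r y \<in> B0 m" "r y' \<in> B0 m" using r_prop assms by auto
  have "(\<lambda>i. (y i - y' i) - (y i - r y i) + (y' i - r y' i)) \<in> C"
    using C_add[OF C_diff[OF assms(3) conjunct2[OF r_prop[OF assms(1)]]] conjunct2[OF r_prop[OF assms(2)]]]
    by simp
  moreover have "(\<lambda>i. (y i - y' i) - (y i - r y i) + (y' i - r y' i)) = (\<lambda>i. r y i - r y' i)"
    by (rule ext) simp
  ultimately show "(\<lambda>i. r y i - r y' i) \<in> C" by simp
qed

lemma r_B0: "\<beta> \<in> B0 m \<Longrightarrow> r \<beta> = \<beta>"
proof -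
  assume b: "\<beta> \<in> B0 m"
  hence "\<beta> \<in> Zm m" using B0_Zm by auto
  hence "r \<beta> \<in> B0 m" "(\<lambda>i. \<beta> i - r \<beta> i) \<in> C" using r_prop by auto
  hence "\<beta> = r \<beta>" using uniq[OF b] by blast
  thus ?thesis by simp
qed

definition H :: "(nat \<Rightarrow> int) monoid" where
  "H = \<lparr>carrier = B0 m, mult = (\<lambda>x y. r (\<lambda>i. x i + y i)), one = (\<lambda>_. 0)\<rparr>"

lemma zero_B0: "(\<lambda>_. 0) \<in> B0 m"
  by (simp add: B0_def ball_a_def d_a_def Zm_def)

lemma H_cg: "comm_group H"
proof (rule comm_groupI)
  fix x y z assume x: "x \<in> carrier H" and y: "y \<in> carrier H" and z: "z \<in> carrier H"
  have xZ: "x \<in> Zm m" and yZ: "y \<in> Zm m" and zZ: "z \<in> Zm m" using x y z B0_Zm by (auto simp: H_def)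
  show "x \<otimes>\<^bsub>H\<^esub> y \<in> carrier H" using r_prop Zm_add[OF xZ yZ] by (simp add: H_def)
  show "x \<otimes>\<^bsub>H\<^esub> y = y \<otimes>\<^bsub>H\<^esub> x" by (simp add: H_def add.commute)
  show "x \<otimes>\<^bsub>H\<^esub> y \<otimes>\<^bsub>H\<^esub> z = x \<otimes>\<^bsub>H\<^esub> (y \<otimes>\<^bsub>H\<^esub> z)"
  proof -
    have rxy: "r (\<lambda>i. x i + y i) \<in> Zm m" "(\<lambda>i. (x i + y i) - r (\<lambda>i. x i + y i) i) \<in> C"
      using r_prop[OF Zm_add[OF xZ yZ]] B0_Zm by auto
    have ryz: "r (\<lambda>i. y i + z i) \<in> Zm m" "(\<lambda>i. (y i + z i) - r (\<lambda>i. y i + z i) i) \<in> C"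
      using r_prop[OF Zm_add[OF yZ zZ]] B0_Zm by auto
    have "r (\<lambda>i. r (\<lambda>i. x i + y i) i + z i) = r (\<lambda>i. x i + r (\<lambda>i. y i + z i) i)"
    proof (rule r_eq)
      show "(\<lambda>i. r (\<lambda>i. x i + y i) i + z i) \<in> Zm m" by (rule Zm_add[OF rxy(1) zZ])
      show "(\<lambda>i. x i + r (\<lambda>i. y i + z i) i) \<in> Zm m" by (rule Zm_add[OF xZ ryz(1)])
      have "(\<lambda>i. ((y i + z i) - r (\<lambda>i. y i + z i) i) - ((x i + y i) - r (\<lambda>i. x i + y i) i)) \<in> C"
        using C_diff[OF ryz(2) rxy(2)] by simp
      moreover have "(\<lambda>i. ((y i + z i) - r (\<lambda>i. y i + z i) i) - ((x i + y i) - r (\<lambda>i. x i + y i) i))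
         = (\<lambda>i. (r (\<lambda>i. x i + y i) i + z i) - (x i + r (\<lambda>i. y i + z i) i))"
        by (rule ext) simp
      ultimately show "(\<lambda>i. (r (\<lambda>i. x i + y i) i + z i) - (x i + r (\<lambda>i. y i + z i) i)) \<in> C" by simp
    qed
    thus ?thesis by (simp add: H_def)
  qed
next
  show "\<one>\<^bsub>H\<^esub> \<in> carrier H" by (simp add: H_def zero_B0)
next
  fix x assume x: "x \<in> carrier H"
  hence xB: "x \<in> B0 m" by (simp add: H_def)
  show "\<one>\<^bsub>H\<^esub> \<otimes>\<^bsub>H\<^esub> x = x" using r_B0[OF xB] by (simp add: H_def)
  have xZ: "x \<in> Zm m" using xB B0_Zm by auto
  have nZ: "(\<lambda>i. - x i) \<in> Zm m" using xZ by (rule Zm_neg)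
  have rn: "r (\<lambda>i. - x i) \<in> B0 m" "(\<lambda>i. - x i - r (\<lambda>i. - x i) i) \<in> C" using r_prop[OF nZ] by auto
  have "r (\<lambda>i. r (\<lambda>i. - x i) i + x i) = r (\<lambda>_. 0)"
  proof (rule r_eq)
    show "(\<lambda>i. r (\<lambda>i. - x i) i + x i) \<in> Zm m" using rn(1) B0_Zm xZ Zm_add by blast
    show "(\<lambda>_. 0) \<in> Zm m" by (rule Zm_zero)
    show "(\<lambda>i. r (\<lambda>i. - x i) i + x i - 0) \<in> C" using C_neg[OF rn(2)] by simp
  qed
  also have "\<dots> = (\<lambda>_. 0)" using r_B0[OF zero_B0] .
  finally show "\<exists>y\<in>carrier H. y \<otimes>\<^bsub>H\<^esub> x = \<one>\<^bsub>H\<^esub>" using rn(1) by (auto simp: H_def)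
qed

lemma H_inv: "x \<in> B0 m \<Longrightarrow> inv\<^bsub>H\<^esub> x = r (\<lambda>i. - x i)"
proof -
  assume xB: "x \<in> B0 m"
  interpret comm_group H by (rule H_cg)
  have xZ: "x \<in> Zm m" using xB B0_Zm by auto
  have nZ: "(\<lambda>i. - x i) \<in> Zm m" using xZ by (rule Zm_neg)
  have rn: "r (\<lambda>i. - x i) \<in> B0 m" "(\<lambda>i. - x i - r (\<lambda>i. - x i) i) \<in> C" using r_prop[OF nZ] by auto
  have "r (\<lambda>i. r (\<lambda>i. - x i) i + x i) = r (\<lambda>_. 0)"
  proof (rule r_eq)
    show "(\<lambda>i. r (\<lambda>i. - x i) i + x i) \<in> Zm m" using rn(1) B0_Zm xZ Zm_add by blast
    show "(\<lambda>_. 0) \<in> Zm m" by (rule Zm_zero)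
    show "(\<lambda>i. r (\<lambda>i. - x i) i + x i - 0) \<in> C" using C_neg[OF rn(2)] by simp
  qed
  also have "\<dots> = (\<lambda>_. 0)" using r_B0[OF zero_B0] .
  finally show ?thesis using rn(1) xB by (intro inv_equality) (auto simp: H_def)
qed

lemma H_diff: assumes "x \<in> B0 m" "y \<in> B0 m" shows "x \<otimes>\<^bsub>H\<^esub> inv\<^bsub>H\<^esub> y = r (\<lambda>i. x i - y i)"
proof -
  have xZ: "x \<in> Zm m" "y \<in> Zm m" using assms B0_Zm by auto
  have nZ: "(\<lambda>i. - y i) \<in> Zm m" using xZ by (intro Zm_neg)
  have rn: "r (\<lambda>i. - y i) \<in> B0 m" "(\<lambda>i. - y i - r (\<lambda>i. - y i) i) \<in> C" using r_prop[OF nZ] by auto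
  have "r (\<lambda>i. x i + r (\<lambda>i. - y i) i) = r (\<lambda>i. x i - y i)"
  proof (rule r_eq)
    show "(\<lambda>i. x i + r (\<lambda>i. - y i) i) \<in> Zm m" using rn(1) B0_Zm xZ Zm_add by blast
    show "(\<lambda>i. x i - y i) \<in> Zm m" using xZ by (intro Zm_diff)
    show "(\<lambda>i. x i + r (\<lambda>i. - y i) i - (x i - y i)) \<in> C" using C_neg[OF rn(2)] by simp
  qed
  thus ?thesis using H_inv[OF assms(2)] by (simp add: H_def)
qed

lemma uu_H: "a \<le> m \<Longrightarrow> b \<le> m \<Longrightarrow> u a \<otimes>\<^bsub>H\<^esub> inv\<^bsub>H\<^esub> (u b) = (\<lambda>i. u a i - u b i)"
  using H_diff[OF u_B0 u_B0] r_B0[OF uu_B0] by simp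

lemma exists_pds: "\<exists>(G :: nat monoid) D'. abelian_planar_difference_set G D' m"
proof (rule transport)
  show "comm_group H" by (rule H_cg)
  show "finite (carrier H)" using finite_B0 by (simp add: H_def)
  show "u ` {..m} \<subseteq> carrier H" using u_B0 by (auto simp: H_def)
  show "card (u ` {..m}) = m + 1"
    by (subst card_image) (auto intro: inj_onI u_inj)
  show "\<forall>g\<in>carrier H. g \<noteq> \<one>\<^bsub>H\<^esub> \<longrightarrow>
      (\<exists>!p. p \<in> u ` {..m} \<times> u ` {..m} \<and> g = fst p \<otimes>\<^bsub>H\<^esub> inv\<^bsub>H\<^esub> (snd p))"
  proof (intro ballI impI)
    fix g assume g: "g \<in> carrier H" "g \<noteq> \<one>\<^bsub>H\<^esub>"
    then obtain a b where ab: "a \<le> m" "b \<le> m" "g = (\<lambda>i. u a i - u b i)"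
      by (auto simp: H_def B0_iff)
    have "a \<noteq> b" using g ab by (auto simp: H_def)
    show "\<exists>!p. p \<in> u ` {..m} \<times> u ` {..m} \<and> g = fst p \<otimes>\<^bsub>H\<^esub> inv\<^bsub>H\<^esub> (snd p)"
    proof (rule ex1I[of _ "(u a, u b)"])
      show "(u a, u b) \<in> u ` {..m} \<times> u ` {..m} \<and> g = fst (u a, u b) \<otimes>\<^bsub>H\<^esub> inv\<^bsub>H\<^esub> (snd (u a, u b))"
        using ab uu_H by auto
      fix q assume q: "q \<in> u ` {..m} \<times> u ` {..m} \<and> g = fst q \<otimes>\<^bsub>H\<^esub> inv\<^bsub>H\<^esub> (snd q)"
      then obtain c d where cd: "c \<le> m" "d \<le> m" "q = (u c, u d)" by auto
      hence "(\<lambda>i. u a i - u b i) = (\<lambda>i. u c i - u d i)" using q ab uu_H by auto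
      hence "a = c \<and> b = d" using \<open>a \<noteq> b\<close> by (rule u_diff_eq)
      thus "q = (u a, u b)" using cd by simp
    qed
  qed
qed

end




lemma ex1_eq: "\<exists>!x. P x \<Longrightarrow> P a \<Longrightarrow> P b \<Longrightarrow> a = b" by blast

locale pds2 = comm_group G for G (structure) +
  fixes D :: "'a set" and m :: nat and h :: "nat \<Rightarrow> 'a"
  assumes D_sub: "D \<subseteq> carrier G"
    and uq: "\<forall>g\<in>carrier G. g \<noteq> \<one> \<longrightarrow> (\<exists>!p. p \<in> D \<times> D \<and> g = fst p \<otimes> inv (snd p))"
    and h_bij: "bij_betw h {..m} D"
begin

lemma hD: "a \<le> m \<Longrightarrow> h a \<in> D" using h_bij by (auto simp: bij_betw_def)
lemma hc: "a \<le> m \<Longrightarrow> h a \<in> carrier G" using hD D_sub by auto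
lemma h_inj: "a \<le> m \<Longrightarrow> b \<le> m \<Longrightarrow> h a = h b \<longleftrightarrow> a = b"
  using h_bij by (auto simp: bij_betw_def inj_on_def)
lemma D_img: "D = h ` {..m}" using h_bij by (auto simp: bij_betw_def)

definition k :: "nat \<Rightarrow> 'a" where "k a = h a \<otimes> inv (h 0)"
lemma kc: "a \<le> m \<Longrightarrow> k a \<in> carrier G" by (simp add: k_def hc)

definition phi :: "(nat \<Rightarrow> int) \<Rightarrow> 'a" where
  "phi x = finprod G (\<lambda>i. k (Suc i) [^] x i) {..<m}"

lemma kpow_Pi: "(\<lambda>i. k (Suc i) [^] (x :: nat \<Rightarrow> int) i) \<in> {..<m} \<rightarrow> carrier G"
proof
  fix i assume "i \<in> {..<m}"
  hence "k (Suc i) \<in> carrier G" using kc by simp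
  thus "k (Suc i) [^] x i \<in> carrier G" by (rule int_pow_closed)
qed

lemma inv_cancel_left: "y \<in> carrier G \<Longrightarrow> z \<in> carrier G \<Longrightarrow> inv y \<otimes> (y \<otimes> z) = z"
  by (simp add: m_assoc[symmetric])

lemma phi_closed: "phi x \<in> carrier G"
  unfolding phi_def by (rule finprod_closed[OF kpow_Pi])

lemma phi_add: "phi (\<lambda>i. x i + y i) = phi x \<otimes> phi y"
proof -
  have "phi (\<lambda>i. x i + y i) = finprod G (\<lambda>i. k (Suc i) [^] x i \<otimes> k (Suc i) [^] y i) {..<m}"
    unfolding phi_def
    by (rule finprod_cong') (use kc in \<open>auto simp: int_pow_mult\<close>)
  also have "\<dots> = phi x \<otimes> phi y" unfolding phi_def by (rule finprod_multf[OF kpow_Pi kpow_Pi])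
  finally show ?thesis .
qed

lemma phi_zero: "phi (\<lambda>_. 0) = \<one>" by (simp add: phi_def)

lemma phi_neg: "phi (\<lambda>i. - x i) = inv (phi x)"
proof -
  have "phi (\<lambda>i. - x i) \<otimes> phi x = \<one>" using phi_add[of "\<lambda>i. - x i" x] phi_zero by simp
  thus ?thesis by (intro inv_equality[symmetric]) (auto simp: phi_closed)
qed

lemma phi_diff: "phi (\<lambda>i. x i - y i) = phi x \<otimes> inv (phi y)"
  using phi_add[of x "\<lambda>i. - y i"] phi_neg[of y] by simp

lemma phi_u: assumes "a \<le> m" shows "phi (u a) = k a"
proof (cases a)
  case 0
  then show ?thesis by (simp add: phi_def u_def k_def hc)
next
  case (Suc j)
  hence j: "j < m" using assms by simp
  have Pi: "(\<lambda>i. if j = i then k (Suc i) else \<one>) \<in> {..<m} \<rightarrow> carrier G"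
  proof
    fix i assume "i \<in> {..<m}"
    thus "(if j = i then k (Suc i) else \<one>) \<in> carrier G" using kc[of "Suc i"] by simp
  qed
  have "phi (u a) = finprod G (\<lambda>i. if j = i then k (Suc i) else \<one>) {..<m}"
    unfolding phi_def
  proof (rule finprod_cong'[OF refl Pi])
    fix i assume i: "i \<in> {..<m}"
    show "k (Suc i) [^] u a i = (if j = i then k (Suc i) else \<one>)"
    proof (cases "j = i")
      case True
      hence "u a i = 1" using Suc by (simp add: u_def)
      thus ?thesis using True kc[of "Suc i"] i by simp
    next
      case False
      hence "u a i = 0" using Suc by (simp add: u_def)
      thus ?thesis using False by simp
    qed
  qed
  also have "\<dots> = k (Suc j)"
  proof (rule finprod_singleton)
    show "j \<in> {..<m}" using j by simp
    show "finite {..<m}" by simp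
    show "(\<lambda>i. k (Suc i)) \<in> {..<m} \<rightarrow> carrier G" using kc by auto
  qed
  finally show ?thesis using Suc by simp
qed

lemma phi_uu: assumes "a \<le> m" "b \<le> m" shows "phi (\<lambda>i. u a i - u b i) = h a \<otimes> inv (h b)"
proof -
  have "phi (\<lambda>i. u a i - u b i) = phi (u a) \<otimes> inv (phi (u b))" by (rule phi_diff)
  also have "\<dots> = k a \<otimes> inv (k b)" using phi_u assms by simp
  also have "\<dots> = h a \<otimes> inv (h 0) \<otimes> (h 0 \<otimes> inv (h b))"
    using assms hc[of 0] by (simp add: k_def inv_mult_group hc)
  also have "\<dots> = h a \<otimes> inv (h b)" using assms hc[of 0] by (simp add: m_assoc hc inv_cancel_left)
  finally show ?thesis .
qed

lemma all_diff: "g \<in> carrier G \<Longrightarrow> \<exists>a\<le>m. \<exists>b\<le>m. g = h a \<otimes> inv (h b)"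
proof (cases "g = \<one>")
  case True
  hence "g = h 0 \<otimes> inv (h 0)" using hc[of 0] by simp
  moreover have "(0::nat) \<le> m" by simp
  ultimately show ?thesis by blast
next
  case False
  assume "g \<in> carrier G"
  have "\<exists>!p. p \<in> D \<times> D \<and> g = fst p \<otimes> inv (snd p)" using uq[rule_format, OF \<open>g \<in> carrier G\<close> False] .
  then obtain p where p: "p \<in> D \<times> D" "g = fst p \<otimes> inv (snd p)" using ex1_implies_ex by blast
  have "fst p \<in> h ` {..m}" "snd p \<in> h ` {..m}" using p(1) D_img by auto
  then obtain a b where ab: "a \<le> m" "b \<le> m" "fst p = h a" "snd p = h b" by blast
  hence "g = h a \<otimes> inv (h b)" using p(2) by simp
  thus ?thesis using ab(1,2) by blast
qed

definition CC :: "(nat \<Rightarrow> int) set" where "CC = {x \<in> Zm m. phi x = \<one>}"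

lemma lin: "linear_code m CC"
  unfolding linear_code_def CC_def
  by (auto simp: Zm_zero phi_zero Zm_add Zm_neg phi_add phi_neg)

lemma perf: "perfect_code m 1 CC"
  unfolding perfect_code_def
proof (intro conjI)
  show "CC \<subseteq> Zm m" by (auto simp: CC_def)
  show "(\<Union>x\<in>CC. ball_a m x 1) = Zm m"
  proof
    show "(\<Union>x\<in>CC. ball_a m x 1) \<subseteq> Zm m" by (auto simp: ball_a_def)
    show "Zm m \<subseteq> (\<Union>x\<in>CC. ball_a m x 1)"
    proof
      fix y assume y: "y \<in> Zm m"
      obtain a b where ab: "a \<le> m" "b \<le> m" "phi y = h a \<otimes> inv (h b)"
        using all_diff[OF phi_closed] by blast
      define \<beta> where "\<beta> = (\<lambda>i. u a i - u b i)"
      define c where "c = (\<lambda>i. y i - \<beta> i)"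
      have bZ: "\<beta> \<in> Zm m" unfolding \<beta>_def by (rule uu_Zm[OF ab(1,2)])
      have "c \<in> Zm m" unfolding c_def using y bZ by (rule Zm_diff)
      moreover have "phi c = \<one>" using ab phi_uu by (simp add: c_def phi_diff \<beta>_def hc)
      moreover have "y \<in> ball_a m c 1"
      proof -
        have "(\<lambda>i. y i - c i) = \<beta>" by (simp add: c_def)
        hence "d_a m y c = d_a m \<beta> (\<lambda>_. 0)" using d_a_trans[of m y c] by simp
        moreover have "d_a m \<beta> (\<lambda>_. 0) \<le> 1"
        proof (rule ball0_char[OF bZ, THEN iffD2])
          show "\<exists>a'\<le>m. \<exists>b'\<le>m. \<beta> = (\<lambda>i. u a' i - u b' i)" using ab(1,2) unfolding \<beta>_def by blast
        qed
        ultimately show ?thesis using y by (simp add: ball_a_def)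
      qed
      ultimately have "c \<in> CC" "y \<in> ball_a m c 1" by (simp_all add: CC_def)
      thus "y \<in> (\<Union>x\<in>CC. ball_a m x 1)" by blast
    qed
  qed
  show "\<forall>x\<in>CC. \<forall>x'\<in>CC. x \<noteq> x' \<longrightarrow> ball_a m x 1 \<inter> ball_a m x' 1 = {}"
  proof (intro ballI impI)
    fix x x' assume x: "x \<in> CC" and x': "x' \<in> CC" and ne: "x \<noteq> x'"
    show "ball_a m x 1 \<inter> ball_a m x' 1 = {}"
    proof (rule ccontr)
      assume "ball_a m x 1 \<inter> ball_a m x' 1 \<noteq> {}"
      then obtain z where z: "z \<in> ball_a m x 1" "z \<in> ball_a m x' 1" by blast
      have zZ: "z \<in> Zm m" using z by (simp add: ball_a_def)
      have xZ: "x \<in> Zm m" "x' \<in> Zm m" using x x' by (auto simp: CC_def)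
      have dec: "\<exists>a\<le>m. \<exists>b\<le>m. (\<lambda>i. z i - w i) = (\<lambda>i. u a i - u b i)"
        if "w \<in> Zm m" "z \<in> ball_a m w 1" for w
      proof -
        have "(\<lambda>i. z i - w i) \<in> Zm m" using zZ that(1) by (rule Zm_diff)
        moreover have "d_a m (\<lambda>i. z i - w i) (\<lambda>_. 0) \<le> 1"
          using that(2) d_a_trans[of m z w] by (simp add: ball_a_def)
        ultimately show ?thesis by (rule ball0_char[THEN iffD1])
      qed
      obtain a b where ab: "a \<le> m" "b \<le> m" "(\<lambda>i. z i - x i) = (\<lambda>i. u a i - u b i)"
        using dec[OF xZ(1) z(1)] by blast
      obtain c d where cd: "c \<le> m" "d \<le> m" "(\<lambda>i. z i - x' i) = (\<lambda>i. u c i - u d i)"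
        using dec[OF xZ(2) z(2)] by blast
      have px: "phi x = \<one>" "phi x' = \<one>" using x x' by (auto simp: CC_def)
      have e1: "phi z = h a \<otimes> inv (h b)"
        using phi_diff[of z x] ab phi_uu[of a b] px phi_closed by simp
      have e2: "phi z = h c \<otimes> inv (h d)"
        using phi_diff[of z x'] cd phi_uu[of c d] px phi_closed by simp
      have "(\<lambda>i. u a i - u b i) = (\<lambda>i. u c i - u d i)"
      proof (cases "a = b")
        case True
        hence "h c \<otimes> inv (h d) = \<one>" using e1 e2 ab hc by simp
        hence "h c = h d" using mult_inv_one_iff[OF hc[OF cd(1)] hc[OF cd(2)]] by simp
        hence "c = d" using cd h_inj by simp
        thus ?thesis using True by simp
      next
        case False
        hence "h a \<noteq> h b" using ab h_inj by simp
        hence ne1: "phi z \<noteq> \<one>" using e1 ab hc mult_inv_one_iff by simp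
        have ex: "\<exists>!p. p \<in> D \<times> D \<and> phi z = fst p \<otimes> inv (snd p)" using uq[rule_format, OF phi_closed ne1] .
        have P1: "(h a, h b) \<in> D \<times> D \<and> phi z = fst (h a, h b) \<otimes> inv (snd (h a, h b))"
          using ab hD e1 by simp
        have P2: "(h c, h d) \<in> D \<times> D \<and> phi z = fst (h c, h d) \<otimes> inv (snd (h c, h d))"
          using cd hD e2 by simp
        have "(h a, h b) = (h c, h d)" by (rule ex1_eq[OF ex P1 P2])
        hence "h a = h c" "h b = h d" by simp_all
        hence "a = c" "b = d" using ab cd h_inj by simp_all
        thus ?thesis by simp
      qed
      hence "(\<lambda>i. z i - x i) = (\<lambda>i. z i - x' i)" using ab cd by simp
      hence "x = x'"
      proof -
        assume e: "(\<lambda>i. z i - x i) = (\<lambda>i. z i - x' i)"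
        show "x = x'"
        proof
          fix i show "x i = x' i" using fun_cong[OF e, of i] by simp
        qed
      qed
      thus False using ne by simp
    qed
  qed
qed

end


theorem mainTheorem9:
  fixes m :: nat
  assumes "m \<ge> 1"
  shows "(\<exists>C. linear_code m C \<and> perfect_code m 1 C) \<longleftrightarrow>
         (\<exists>(G :: nat monoid) D. abelian_planar_difference_set G D m)"
proof
  assume "\<exists>C. linear_code m C \<and> perfect_code m 1 C"
  then obtain C where "linear_code m C" "perfect_code m 1 C" by blast
  then interpret pcode m C by unfold_locales
  show "\<exists>(G :: nat monoid) D. abelian_planar_difference_set G D m" by (rule exists_pds)
next
  assume "\<exists>(G :: nat monoid) D. abelian_planar_difference_set G D m"
  then obtain G :: "nat monoid" and D where ap: "abelian_planar_difference_set G D m" by blast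
  have cg: "comm_group G" and fin: "finite (carrier G)" and Dsub: "D \<subseteq> carrier G"
    and cD: "card D = m + 1"
    and uq: "\<forall>g\<in>carrier G. g \<noteq> \<one>\<^bsub>G\<^esub> \<longrightarrow> (\<exists>!p. p \<in> D \<times> D \<and> g = fst p \<otimes>\<^bsub>G\<^esub> inv\<^bsub>G\<^esub> (snd p))"
    using ap by (auto simp: abelian_planar_difference_set_def)
  have "finite D" using fin Dsub finite_subset by blast
  then obtain h where h: "bij_betw h {0..<card D} D" using ex_bij_betw_nat_finite by blast
  have "{0..<card D} = {..m}" using cD by auto
  with h have hb: "bij_betw h {..m} D" by simp
  interpret pds2 G D m h
  proof -
    interpret comm_group G by (rule cg)
    show "pds2 G D m h" by unfold_locales (use Dsub uq hb in auto)
  qed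
  show "\<exists>C. linear_code m C \<and> perfect_code m 1 C" using lin perf by blast
qed

end
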